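(* Let $\alpha>-1$ and let $W(x,y)=\dfrac{x^{\alpha}y^{\alpha+1}e^{-x-y}}{x+y}$ on $(0,\infty)^2$. Let $\{p_k\}_{k\ge0}$, $\{q_k\}_{k\ge0}$ be the monic Cauchy–Laguerre biorthogonal polynomials, i.e. $\deg p_k=\deg q_k=k$, both monic, with $$\int_0^\infty\!\!\int_0^\infty p_k(x)q_l(y)W(x,y)\,dx\,dy=h_k\delta_{kl}.$$ Write $p_k(x)=\sum_{i=0}^k a_{k,i}x^i$ with $a_{k,k}=1$, and define for each $\beta\in\mathbb{N}$ the numbers $b_{\beta,i}$, $0\le i\le\beta$, recursively by $b_{\beta,0}=1$ and $b_{\beta,i}=-\sum_{j=0}^{i-1}b_{\beta,j}\,a_{\beta-j,\beta-i}$. Then for all integers $\beta\ge k\ge0$, $$\int_0^\infty\!\!\int_0^\infty x^{\beta}q_k(y)W(x,y)\,dx\,dy=b_{\beta,\beta-k}\,h_k.$$ *)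

theory Defs
  imports "HOL-Analysis.Analysis" "HOL-Computational_Algebra.Polynomial"
begin

definition CL_weight :: "real \<Rightarrow> real \<Rightarrow> real \<Rightarrow> real" where
  "CL_weight \<alpha> x y = x powr \<alpha> * y powr (\<alpha> + 1) * exp (- x - y) / (x + y)"

definition dbl_int :: "(real \<Rightarrow> real \<Rightarrow> real) \<Rightarrow> real" where
  "dbl_int f = (LBINT y:{0<..}. (LBINT x:{0<..}. f x y))"

function bcoef :: "(nat \<Rightarrow> real poly) \<Rightarrow> nat \<Rightarrow> nat \<Rightarrow> real" where
  "bcoef p \<beta> i = (if i = 0 then 1
     else - (\<Sum>j<i. bcoef p \<beta> j * coeff (p (\<beta> - j)) (\<beta> - i)))"
  by auto
termination by (relation "Wellfounded.measure (\<lambda>(p, \<beta>, i). i)") auto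

end

theory Submission
  imports Defs
begin

lemma gamma_int:
  assumes "s > (0::real)"
  shows "integrable lborel (\<lambda>t. indicator {0..} t * t powr (s - 1) / exp t)"
proof (rule integrableI_nonneg)
  show "(\<lambda>t. indicator {0..} t * t powr (s - 1) / exp t) \<in> borel_measurable lborel" by measurable
  show "AE x in lborel. 0 \<le> indicator {0..} x * x powr (s - 1) / exp x" by (auto simp: indicator_def)
  show "(\<integral>\<^sup>+ x. ennreal (indicator {0..} x * x powr (s - 1) / exp x) \<partial>lborel) < \<infinity>"
    unfolding Gamma_conv_nn_integral_real[OF assms, symmetric] by simp
qed

lemma mono_int:
  assumes "\<alpha> > (-1::real)"
  shows "integrable lborel (\<lambda>x. indicator {0<..} x * x ^ n * x powr \<alpha> * exp (- x))"
proof -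
  have "integrable lborel (\<lambda>t. indicator {0..} t * t powr ((\<alpha> + n + 1) - 1) / exp t)"
    by (rule gamma_int) (use assms in simp)
  moreover have "(\<lambda>x::real. indicator {0..} x * x powr (\<alpha> + real n + 1 - 1) / exp x)
       = (\<lambda>x. indicator {0<..} x * x ^ n * x powr \<alpha> * exp (- x))"
  proof
    fix x :: real
    show "indicator {0..} x * x powr (\<alpha> + real n + 1 - 1) / exp x
       = indicator {0<..} x * x ^ n * x powr \<alpha> * exp (- x)"
    proof (cases "x > 0")
      case True
      then show ?thesis by (simp add: powr_add powr_realpow exp_minus field_simps)
    next
      case False
      then show ?thesis by (cases "x = 0") (auto simp: indicator_def)
    qed
  qed
  ultimately show ?thesis by simp
qed

lemma upoly_int:
  assumes "\<alpha> > (-1::real)"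
  shows "integrable lborel (\<lambda>x. indicator {0<..} x * poly P x * x powr \<alpha> * exp (- x))"
proof -
  have "integrable lborel (\<lambda>x. \<Sum>i\<le>degree P. coeff P i * (indicator {0<..} x * x ^ i * x powr \<alpha> * exp (- x)))"
    using mono_int[OF assms] by (intro Bochner_Integration.integrable_sum[where f="\<lambda>i x. coeff P i * (indicator {0<..} x * x ^ i * x powr \<alpha> * exp (- x))"]) auto
  moreover have "(\<lambda>x. \<Sum>i\<le>degree P. coeff P i * (indicator {0<..} x * x ^ i * x powr \<alpha> * exp (- x)))
     = (\<lambda>x. indicator {0<..} x * poly P x * x powr \<alpha> * exp (- x))"
    by (auto simp: poly_altdef sum_distrib_left sum_distrib_right mult_ac)
  ultimately show ?thesis by simp
qed

declare bcoef.simps[simp del]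

lemma poly_meas[measurable]:
  assumes [measurable]: "f \<in> borel_measurable M"
  shows "(\<lambda>x. poly R (f x) :: real) \<in> borel_measurable M"
proof -
  have "poly R \<in> borel_measurable borel"
    by (rule borel_measurable_continuous_onI) (intro continuous_intros)
  from measurable_compose[OF assms this] show ?thesis .
qed

lemma W_meas:
  "(\<lambda>(y,x). CL_weight \<alpha> x y) \<in> borel_measurable (lborel \<Otimes>\<^sub>M lborel)"
  unfolding CL_weight_def by measurable

lemma joint_int:
  assumes "\<alpha> > (-1::real)"
  shows "integrable (lborel \<Otimes>\<^sub>M lborel)
    (\<lambda>(y,x). indicator {0<..} y * indicator {0<..} x * (poly P x * poly Q y * CL_weight \<alpha> x y))"
proof -
  have PS: "pair_sigma_finite lborel lborel" by unfold_locales
  define a where "a y = indicator {0<..} y * poly Q y * y powr \<alpha> * exp (- y)" for y :: real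
  define b where "b x = indicator {0<..} x * poly P x * x powr \<alpha> * exp (- x)" for x :: real
  have ia: "integrable lborel a" unfolding a_def by (rule upoly_int[OF assms])
  have ib: "integrable lborel b" unfolding b_def by (rule upoly_int[OF assms])
  have ma[measurable]: "a \<in> borel_measurable lborel" using ia by auto
  have mb[measurable]: "b \<in> borel_measurable lborel" using ib by auto
  have prod: "integrable (lborel \<Otimes>\<^sub>M lborel) (\<lambda>(y,x). a y * b x)"
  proof (rule pair_sigma_finite.Fubini_integrable[OF PS])
    show "(\<lambda>(y,x). a y * b x) \<in> borel_measurable (lborel \<Otimes>\<^sub>M lborel)" by measurable
    have "integrable lborel (\<lambda>y. \<bar>a y\<bar> * (\<integral>x. \<bar>b x\<bar> \<partial>lborel))"
      using ia by (intro integrable_mult_left integrable_abs)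
    moreover have "(\<lambda>y. \<bar>a y\<bar> * (\<integral>x. \<bar>b x\<bar> \<partial>lborel)) = (\<lambda>y. \<integral>x. norm ((\<lambda>(y,x). a y * b x) (y, x)) \<partial>lborel)"
      by (simp add: abs_mult)
    ultimately show "integrable lborel (\<lambda>y. \<integral>x. norm ((\<lambda>(y,x). a y * b x) (y, x)) \<partial>lborel)" by simp
    show "AE y in lborel. integrable lborel (\<lambda>x. (\<lambda>(y,x). a y * b x) (y, x))"
      using ib by (simp add: integrable_mult_right)
  qed
  show ?thesis
  proof (rule Bochner_Integration.integrable_bound[OF prod])
    show "(\<lambda>(y,x). indicator {0<..} y * indicator {0<..} x * (poly P x * poly Q y * CL_weight \<alpha> x y))
       \<in> borel_measurable (lborel \<Otimes>\<^sub>M lborel)"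
      unfolding CL_weight_def by measurable
    show "AE z in lborel \<Otimes>\<^sub>M lborel. norm ((\<lambda>(y,x). indicator {0<..} y * indicator {0<..} x * (poly P x * poly Q y * CL_weight \<alpha> x y)) z)
       \<le> norm ((\<lambda>(y,x). a y * b x) z)"
    proof (rule AE_I2, clarify)
      fix y x :: real
      show "norm (indicator {0<..} y * indicator {0<..} x * (poly P x * poly Q y * CL_weight \<alpha> x y))
         \<le> norm (a y * b x)"
      proof (cases "x > 0 \<and> y > 0")
        case True
        then have x: "x > 0" and y: "y > 0" by auto
        define K where "K = \<bar>poly Q y\<bar> * y powr \<alpha> * exp (- y) * (\<bar>poly P x\<bar> * x powr \<alpha> * exp (- x))"
        have K0: "K \<ge> 0" unfolding K_def by simp
        have le1: "y / (x + y) \<le> 1" using x y by simp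
        have "norm (indicator {0<..} y * indicator {0<..} x * (poly P x * poly Q y * CL_weight \<alpha> x y))
           = K * (y / (x + y))"
          using x y unfolding K_def CL_weight_def
          by (simp add: abs_mult powr_add exp_diff exp_minus field_simps)
        also have "\<dots> \<le> K" using mult_left_mono[OF le1 K0] by simp
        also have "\<dots> = norm (a y * b x)"
          using x y unfolding K_def a_def b_def by (simp add: abs_mult)
        finally show ?thesis .
      next
        case False
        then show ?thesis by (auto simp: indicator_def)
      qed
    qed
  qed
qed

lemma dbl_int_eq:
  assumes "\<alpha> > (-1::real)"
  shows "dbl_int (\<lambda>x y. poly P x * poly Q y * CL_weight \<alpha> x y) =
    integral\<^sup>L (lborel \<Otimes>\<^sub>M lborel)
    (\<lambda>(y,x). indicator {0<..} y * indicator {0<..} x * (poly P x * poly Q y * CL_weight \<alpha> x y))"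
proof -
  have PS: "pair_sigma_finite lborel lborel" by unfold_locales
  have "dbl_int (\<lambda>x y. poly P x * poly Q y * CL_weight \<alpha> x y) =
     (\<integral>y. (\<integral>x. (\<lambda>(y,x). indicator {0<..} y * indicator {0<..} x * (poly P x * poly Q y * CL_weight \<alpha> x y)) (y,x) \<partial>lborel) \<partial>lborel)"
    unfolding dbl_int_def set_lebesgue_integral_def
  proof (rule Bochner_Integration.integral_cong[OF refl])
    fix y :: real
    have "(\<integral>x. indicator {0<..} y * (indicator {0<..} x * (poly P x * poly Q y * CL_weight \<alpha> x y)) \<partial>lborel)
       = indicator {0<..} y * (\<integral>x. indicator {0<..} x * (poly P x * poly Q y * CL_weight \<alpha> x y) \<partial>lborel)"
      by (rule integral_mult_right_zero)
    then show "indicator {0<..} y *\<^sub>R (\<integral>x. indicator {0<..} x *\<^sub>R (poly P x * poly Q y * CL_weight \<alpha> x y) \<partial>lborel)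
      = (\<integral>x. (\<lambda>(y,x). indicator {0<..} y * indicator {0<..} x * (poly P x * poly Q y * CL_weight \<alpha> x y)) (y,x) \<partial>lborel)"
      by (simp only: real_scaleR_def prod.case mult.assoc)
  qed
  also have "\<dots> = integral\<^sup>L (lborel \<Otimes>\<^sub>M lborel)
    (\<lambda>(y,x). indicator {0<..} y * indicator {0<..} x * (poly P x * poly Q y * CL_weight \<alpha> x y))"
    by (rule pair_sigma_finite.integral_fst'[OF PS joint_int[OF assms]])
  finally show ?thesis .
qed

lemma monom_expand:
  assumes deg: "\<And>k. degree (p k) = k" and lc: "\<And>k. lead_coeff (p k) = (1::real)"
  shows "monom 1 \<beta> = (\<Sum>i\<le>\<beta>. smult (bcoef p \<beta> i) (p (\<beta> - i)))"
proof (rule poly_eqI)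
  fix n
  show "coeff (monom 1 \<beta>) n = coeff (\<Sum>i\<le>\<beta>. smult (bcoef p \<beta> i) (p (\<beta> - i))) n"
  proof (cases "n > \<beta>")
    case True
    then have "\<And>i. coeff (p (\<beta> - i)) n = 0" using deg by (intro coeff_eq_0) (metis diff_le_self le_less_trans)
    then show ?thesis using True by (simp add: coeff_sum coeff_monom)
  next
    case False
    define m where "m = \<beta> - n"
    have m: "m \<le> \<beta>" "n = \<beta> - m" using False unfolding m_def by auto
    have "coeff (\<Sum>i\<le>\<beta>. smult (bcoef p \<beta> i) (p (\<beta> - i))) n
        = (\<Sum>i\<le>\<beta>. bcoef p \<beta> i * coeff (p (\<beta> - i)) n)" by (simp add: coeff_sum)
    also have "\<dots> = (\<Sum>i\<le>m. bcoef p \<beta> i * coeff (p (\<beta> - i)) n)"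
    proof (rule sum.mono_neutral_right)
      show "\<forall>i\<in>{..\<beta>} - {..m}. bcoef p \<beta> i * coeff (p (\<beta> - i)) n = 0"
        using m deg by (auto intro!: coeff_eq_0)
    qed (use m in auto)
    also have "\<dots> = (\<Sum>i<m. bcoef p \<beta> i * coeff (p (\<beta> - i)) (\<beta> - m)) + bcoef p \<beta> m"
      using m lc deg by (simp add: lessThan_Suc_atMost[symmetric])
    also have "\<dots> = (if m = 0 then 1 else 0)"
      by (subst (2) bcoef.simps) simp
    also have "\<dots> = coeff (monom 1 \<beta>) n" using m by (auto simp: coeff_monom)
    finally show ?thesis by simp
  qed
qed

theorem proposition2:
  fixes \<alpha> :: real and p q :: "nat \<Rightarrow> real poly" and h :: "nat \<Rightarrow> real"
  assumes "\<alpha> > -1"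
    and "\<And>k. degree (p k) = k" and "\<And>k. lead_coeff (p k) = 1"
    and "\<And>k. degree (q k) = k" and "\<And>k. lead_coeff (q k) = 1"
    and "\<And>k l. dbl_int (\<lambda>x y. poly (p k) x * poly (q l) y * CL_weight \<alpha> x y)
                 = (if k = l then h k else 0)"
    and "k \<le> \<beta>"
  shows "dbl_int (\<lambda>x y. x ^ \<beta> * poly (q k) y * CL_weight \<alpha> x y) = bcoef p \<beta> (\<beta> - k) * h k"
proof -
  define H where "H P = (\<lambda>(y,x). indicator {0<..} y * indicator {0<..} x *
      (poly P x * poly (q k) y * CL_weight \<alpha> x y))" for P :: "real poly"
  have me: "monom 1 \<beta> = (\<Sum>i\<le>\<beta>. smult (bcoef p \<beta> i) (p (\<beta> - i)))"
    by (rule monom_expand) (use assms(2,3) in auto)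
  have "dbl_int (\<lambda>x y. x ^ \<beta> * poly (q k) y * CL_weight \<alpha> x y)
      = dbl_int (\<lambda>x y. poly (monom 1 \<beta>) x * poly (q k) y * CL_weight \<alpha> x y)"
    by (simp add: poly_monom)
  also have "\<dots> = integral\<^sup>L (lborel \<Otimes>\<^sub>M lborel) (H (monom 1 \<beta>))"
    unfolding H_def by (rule dbl_int_eq[OF assms(1)])
  also have "H (monom 1 \<beta>) = (\<lambda>z. \<Sum>i\<le>\<beta>. bcoef p \<beta> i * H (p (\<beta> - i)) z)"
  proof
    fix z :: "real \<times> real"
    obtain y x where z: "z = (y, x)" by (cases z)
    define E where "E = indicator {0<..} y * indicator {0<..} x * (poly (q k) y * CL_weight \<alpha> x y)"
    have HE: "H P z = poly P x * E" for P
      unfolding H_def E_def z by (simp only: prod.case) (simp add: mult_ac)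
    have pm: "poly (monom 1 \<beta>) x = (\<Sum>i\<le>\<beta>. bcoef p \<beta> i * poly (p (\<beta> - i)) x)"
      by (subst me) (simp add: poly_sum)
    show "H (monom 1 \<beta>) z = (\<Sum>i\<le>\<beta>. bcoef p \<beta> i * H (p (\<beta> - i)) z)"
      unfolding HE pm by (simp add: sum_distrib_right mult.assoc)
  qed
  also have "integral\<^sup>L (lborel \<Otimes>\<^sub>M lborel) (\<lambda>z. \<Sum>i\<le>\<beta>. bcoef p \<beta> i * H (p (\<beta> - i)) z)
      = (\<Sum>i\<le>\<beta>. bcoef p \<beta> i * integral\<^sup>L (lborel \<Otimes>\<^sub>M lborel) (H (p (\<beta> - i))))"
  proof -
    have int: "\<And>i. integrable (lborel \<Otimes>\<^sub>M lborel) (H (p (\<beta> - i)))"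
      unfolding H_def by (rule joint_int[OF assms(1)])
    show ?thesis
      by (subst Bochner_Integration.integral_sum) (use int in auto)
  qed
  also have "\<dots> = (\<Sum>i\<le>\<beta>. bcoef p \<beta> i * (if \<beta> - i = k then h k else 0))"
  proof (rule sum.cong[OF refl])
    fix i
    have "integral\<^sup>L (lborel \<Otimes>\<^sub>M lborel) (H (p (\<beta> - i)))
        = dbl_int (\<lambda>x y. poly (p (\<beta> - i)) x * poly (q k) y * CL_weight \<alpha> x y)"
      unfolding H_def by (rule dbl_int_eq[OF assms(1), symmetric])
    then show "bcoef p \<beta> i * integral\<^sup>L (lborel \<Otimes>\<^sub>M lborel) (H (p (\<beta> - i)))
        = bcoef p \<beta> i * (if \<beta> - i = k then h k else 0)"
      using assms(6) by simp
  qed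
  also have "\<dots> = (\<Sum>i\<le>\<beta>. if i = \<beta> - k then bcoef p \<beta> i * h k else 0)"
    by (rule sum.cong[OF refl]) (use assms(7) in auto)
  also have "\<dots> = bcoef p \<beta> (\<beta> - k) * h k"
    by (subst sum.delta) auto
  finally show ?thesis .
qed

end
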